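(* Let $G_m$ be a parametric regulatory network, $R$ a well-formed set of influence constraints, $v\in V$, and $(L,U)$ a pair of parametrisations. Let $M_v=\{(u,v,s)\in R\mid s\in\{-1,+1\}\}$. Then $\nabla_{M_v}(L,U)=(L,U)$ if and only if for all $\omega,\omega'\in\Omega_v$ with $\omega\preceq_v\omega'$ we have $L_{v,\omega}\le L_{v,\omega'}$ and $U_{v,\omega}\le U_{v,\omega'}$.
   Context: An influence graph is $G=(V,I)$, $V=\{1,\dots,n\}$, $I\subseteq V\times V$; regulators $n^-(v)=\{u\mid(u,v)\in I\}$. $m\in\mathbb N^n$, $D_v=\{0,\dots,m_v\}$, PRN $G_m=(G,m)$. Regulator states $\Omega_v=\prod_{u\in n^-(v)}D_u$; $\omega[u\leftarrow k]$ replaces component $u$ of $\omega$ by $k$. Parametrisations: vectors with coordinates $P_{v,\omega}\in D_v$ for $v\in V$, $\omega\in\Omega_v$. $R\subseteq V\times V\times\{+1,-1,\mathrm o\}$ is well-formed if $u\in n^-(v)$ for all $(u,v,c)\in R$ and never both $(u,v,+1),(u,v,-1)\in R$. Order $\preceq_v$ on $\Omega_v$: $\omega\preceq_v\omega'$ iff for all $u\in n^-(v)$, $\omega_u\le\omega'_u$ if $(u,v,+1)\in R$, $\omega_u\ge\omega'_u$ if $(u,v,-1)\in R$, $\omega_u=\omega'_u$ otherwise. For $s\in\{+1,-1\}$, $\nabla_{(u,v,s)}(L,U)$ is the fixpoint of iterating from $(L,U)$ the map $f(L,U)=(L',U')$ with, for all $\omega\in\Omega_v$, $L'_{v,\omega}=\max(\{L_{v,\omega}\}\cup\{L_{v,\omega[u\leftarrow\omega_u-s]}\mid\omega_u-s\in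 D_u\})$ and $U'_{v,\omega}=\min(\{U_{v,\omega}\}\cup\{U_{v,\omega[u\leftarrow\omega_u+s]}\mid\omega_u+s\in D_u\})$, all coordinates of other nodes unchanged. For a set $R'$ of such constraints, $\nabla_{R'}(L,U)$ is the fixpoint of iterating from $(L,U)$ the composition of the operators $\nabla_r$, $r\in R'$. *)

theory Defs
  imports Main "HOL-Library.FuncSet"
begin

text \<open>Nodes are natural numbers; V = {1..n}.  An influence graph is I \<subseteq> V \<times> V,
  m :: nat \<Rightarrow> nat gives the maximal levels (D_v = {0..m v}).\<close>

datatype sign = Pos | Neg | Obs

definition sval :: "sign \<Rightarrow> int" where
  "sval s = (case s of Pos \<Rightarrow> 1 | Neg \<Rightarrow> -1 | Obs \<Rightarrow> 0)"

definition regs :: "(nat \<times> nat) set \<Rightarrow> nat \<Rightarrow> nat set" where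
  "regs I v = {u. (u, v) \<in> I}"

definition Omega :: "(nat \<times> nat) set \<Rightarrow> (nat \<Rightarrow> nat) \<Rightarrow> nat \<Rightarrow> (nat \<Rightarrow> nat) set" where
  "Omega I m v = PiE (regs I v) (\<lambda>u. {0..m u})"

text \<open>A parametrisation assigns P v \<omega> \<in> D_v to each v \<in> V, \<omega> \<in> Omega_v
  (values at other arguments are irrelevant and never changed by the operators).\<close>
type_synonym param = "nat \<Rightarrow> (nat \<Rightarrow> nat) \<Rightarrow> nat"

definition is_param :: "nat \<Rightarrow> (nat \<times> nat) set \<Rightarrow> (nat \<Rightarrow> nat) \<Rightarrow> param \<Rightarrow> bool" where
  "is_param n I m P \<longleftrightarrow> (\<forall>v\<in>{1..n}. \<forall>\<omega>\<in>Omega I m v. P v \<omega> \<le> m v)"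

definition well_formed :: "(nat \<times> nat) set \<Rightarrow> (nat \<times> nat \<times> sign) set \<Rightarrow> bool" where
  "well_formed I R \<longleftrightarrow>
     (\<forall>(u, v, c) \<in> R. u \<in> regs I v) \<and>
     (\<forall>u v. \<not> ((u, v, Pos) \<in> R \<and> (u, v, Neg) \<in> R))"

definition preceq :: "(nat \<times> nat) set \<Rightarrow> (nat \<times> nat \<times> sign) set \<Rightarrow> nat
    \<Rightarrow> (nat \<Rightarrow> nat) \<Rightarrow> (nat \<Rightarrow> nat) \<Rightarrow> bool" where
  "preceq I R v \<omega> \<omega>' \<longleftrightarrow>
     (\<forall>u\<in>regs I v.
        (if (u, v, Pos) \<in> R then \<omega> u \<le> \<omega>' u
         else if (u, v, Neg) \<in> R then \<omega> u \<ge> \<omega>' u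
         else \<omega> u = \<omega>' u))"

definition nabla_step :: "(nat \<times> nat) set \<Rightarrow> (nat \<Rightarrow> nat) \<Rightarrow> nat \<times> nat \<times> sign
    \<Rightarrow> param \<times> param \<Rightarrow> param \<times> param" where
  "nabla_step I m r LU = (case r of (u, v, s) \<Rightarrow> case LU of (L, U) \<Rightarrow>
     ((\<lambda>w \<omega>. if w = v \<and> \<omega> \<in> Omega I m v then
          Max ({L v \<omega>} \<union> {L v (\<omega>(u := nat k)) | k. k = int (\<omega> u) - sval s \<and> 0 \<le> k \<and> k \<le> int (m u)})
        else L w \<omega>),
      (\<lambda>w \<omega>. if w = v \<and> \<omega> \<in> Omega I m v then
          Min ({U v \<omega>} \<union> {U v (\<omega>(u := nat k)) | k. k = int (\<omega> u) + sval s \<and> 0 \<le> k \<and> k \<le> int (m u)})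
        else U w \<omega>)))"

definition iter_fix :: "('a \<Rightarrow> 'a) \<Rightarrow> 'a \<Rightarrow> 'a" where
  "iter_fix f x = (THE y. (\<exists>k. y = (f ^^ k) x) \<and> f y = y)"

definition nabla :: "(nat \<times> nat) set \<Rightarrow> (nat \<Rightarrow> nat) \<Rightarrow> nat \<times> nat \<times> sign
    \<Rightarrow> param \<times> param \<Rightarrow> param \<times> param" where
  "nabla I m r = iter_fix (nabla_step I m r)"

text \<open>\<nabla>_{R'} for a set R' enumerated by a list rs (composition in list order).\<close>
definition nabla_set :: "(nat \<times> nat) set \<Rightarrow> (nat \<Rightarrow> nat) \<Rightarrow> (nat \<times> nat \<times> sign) list
    \<Rightarrow> param \<times> param \<Rightarrow> param \<times> param" where
  "nabla_set I m rs = iter_fix (\<lambda>p. fold (nabla I m) rs p)"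

definition M_of :: "(nat \<times> nat \<times> sign) set \<Rightarrow> nat \<Rightarrow> (nat \<times> nat \<times> sign) set" where
  "M_of R v = {(u, w, s) \<in> R. w = v \<and> s \<in> {Pos, Neg}}"

end

theory Submission
  imports Defs
begin

lemma funpow_fix: "f y = y \<Longrightarrow> (f ^^ j) y = y"
  by (induct j) auto

lemma iter_fix_eq:
  assumes "f ((f ^^ k) x) = (f ^^ k) x"
  shows "iter_fix f x = (f ^^ k) x"
  unfolding iter_fix_def
proof (rule the_equality)
  show "(\<exists>j. (f ^^ k) x = (f ^^ j) x) \<and> f ((f ^^ k) x) = (f ^^ k) x" using assms by blast
next
  fix y assume "(\<exists>j. y = (f ^^ j) x) \<and> f y = y"
  then obtain j where y: "y = (f ^^ j) x" and fy: "f y = y" by blast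
  show "y = (f ^^ k) x"
  proof (cases "j \<le> k")
    case True
    then have "(f ^^ k) x = (f ^^ (k - j)) ((f ^^ j) x)"
      by (metis funpow_add le_add_diff_inverse2 comp_apply)
    then show ?thesis using funpow_fix[of f y "k - j", OF fy] y by simp
  next
    case False
    then have "(f ^^ j) x = (f ^^ (j - k)) ((f ^^ k) x)"
      by (metis funpow_add le_add_diff_inverse2 comp_apply nat_le_linear)
    then show ?thesis using funpow_fix[of f "(f ^^ k) x" "j - k", OF assms] y by simp
  qed
qed

lemma iter_term:
  assumes pres: "\<And>x. P x \<Longrightarrow> P (f x)"
    and dec: "\<And>x. P x \<Longrightarrow> f x \<noteq> x \<Longrightarrow> (\<mu> (f x) :: nat) < \<mu> x"
    and "P x"
  shows "\<exists>k. f ((f ^^ k) x) = (f ^^ k) x"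
  using assms(3)
proof (induction "\<mu> x" arbitrary: x rule: less_induct)
  case less
  show ?case
  proof (cases "f x = x")
    case True then show ?thesis by (intro exI[of _ 0]) simp
  next
    case False
    from less.hyps[OF dec[OF less.prems False] pres[OF less.prems]]
    obtain k where "f ((f ^^ k) (f x)) = (f ^^ k) (f x)" by blast
    then show ?thesis by (intro exI[of _ "Suc k"]) (simp add: funpow_Suc_right del: funpow.simps)
  qed
qed

lemma iter_fix_self: "f x = x \<Longrightarrow> iter_fix f x = x"
  using iter_fix_eq[of f 0 x] by simp

definition le_on :: "nat \<Rightarrow> (nat \<Rightarrow> nat) set \<Rightarrow> param \<times> param \<Rightarrow> param \<times> param \<Rightarrow> bool" where
  "le_on v W p q \<longleftrightarrow> (\<forall>w \<omega>. (w \<noteq> v \<or> \<omega> \<notin> W) \<longrightarrow> fst q w \<omega> = fst p w \<omega> \<and> snd q w \<omega> = snd p w \<omega>)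
     \<and> (\<forall>\<omega>\<in>W. fst p v \<omega> \<le> fst q v \<omega> \<and> snd q v \<omega> \<le> snd p v \<omega>)"

definition bnd :: "nat \<Rightarrow> (nat \<Rightarrow> nat) set \<Rightarrow> nat \<Rightarrow> param \<times> param \<Rightarrow> bool" where
  "bnd v W B p \<longleftrightarrow> (\<forall>\<omega>\<in>W. fst p v \<omega> \<le> B)"

definition mu :: "nat \<Rightarrow> (nat \<Rightarrow> nat) set \<Rightarrow> nat \<Rightarrow> param \<times> param \<Rightarrow> nat" where
  "mu v W B p = (\<Sum>\<omega>\<in>W. B - fst p v \<omega>) + (\<Sum>\<omega>\<in>W. snd p v \<omega>)"

lemma le_on_refl: "le_on v W p p" by (auto simp: le_on_def)

lemma le_on_trans: assumes "le_on v W p q" "le_on v W q r" shows "le_on v W p r"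
  unfolding le_on_def
proof (intro conjI allI impI ballI)
  fix w \<omega> assume h: "w \<noteq> v \<or> \<omega> \<notin> W"
  have "fst q w \<omega> = fst p w \<omega> \<and> snd q w \<omega> = snd p w \<omega>" using assms(1) h unfolding le_on_def by blast
  moreover have "fst r w \<omega> = fst q w \<omega> \<and> snd r w \<omega> = snd q w \<omega>" using assms(2) h unfolding le_on_def by blast
  ultimately show "fst r w \<omega> = fst p w \<omega>" "snd r w \<omega> = snd p w \<omega>" by simp_all
next
  fix \<omega> assume h: "\<omega> \<in> W"
  have "fst p v \<omega> \<le> fst q v \<omega> \<and> snd q v \<omega> \<le> snd p v \<omega>" using assms(1) h unfolding le_on_def by blast
  moreover have "fst q v \<omega> \<le> fst r v \<omega> \<and> snd r v \<omega> \<le> snd q v \<omega>" using assms(2) h unfolding le_on_def by blast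
  ultimately show "fst p v \<omega> \<le> fst r v \<omega>" "snd r v \<omega> \<le> snd p v \<omega>" by simp_all
qed

lemma le_on_antisym: assumes "le_on v W p q" "le_on v W q p" shows "p = q"
proof -
  obtain a b where p: "p = (a, b)" by fastforce
  obtain c d where q: "q = (c, d)" by fastforce
  have key: "a w \<omega> = c w \<omega> \<and> b w \<omega> = d w \<omega>" for w \<omega>
  proof (cases "w = v \<and> \<omega> \<in> W")
    case True
    then show ?thesis using assms unfolding p q le_on_def by (auto intro: antisym)
  next
    case False
    then have "w \<noteq> v \<or> \<omega> \<notin> W" by blast
    then show ?thesis using assms(1) unfolding p q le_on_def by auto
  qed
  have "a = c" "b = d" using key by (auto intro!: ext)
  then show ?thesis using p q by simp
qed

lemma bnd_le: "le_on v W p q \<Longrightarrow> bnd v W B q \<Longrightarrow> bnd v W B p"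
  unfolding le_on_def bnd_def by (meson order_trans)

lemma mu_less:
  assumes fin: "finite W" and le: "le_on v W p q" and ne: "p \<noteq> q" and b: "bnd v W B q"
  shows "mu v W B q < mu v W B p"
proof -
  have "\<exists>\<omega>\<in>W. fst p v \<omega> \<noteq> fst q v \<omega> \<or> snd p v \<omega> \<noteq> snd q v \<omega>"
  proof (rule ccontr)
    assume "\<not> ?thesis"
    then have "le_on v W q p" using le unfolding le_on_def by auto
    then show False using le_on_antisym[OF le] ne by blast
  qed
  then obtain \<omega> where w: "\<omega> \<in> W" and d: "fst p v \<omega> \<noteq> fst q v \<omega> \<or> snd p v \<omega> \<noteq> snd q v \<omega>" by blast
  have bp: "bnd v W B p" using bnd_le[OF le b] .
  have m1: "\<forall>x\<in>W. B - fst q v x \<le> B - fst p v x" using le unfolding le_on_def by auto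
  have m2: "\<forall>x\<in>W. snd q v x \<le> snd p v x" using le unfolding le_on_def by auto
  have s1: "(\<Sum>x\<in>W. B - fst q v x) \<le> (\<Sum>x\<in>W. B - fst p v x)" using m1 by (intro sum_mono) auto
  have s2: "(\<Sum>x\<in>W. snd q v x) \<le> (\<Sum>x\<in>W. snd p v x)" using m2 by (intro sum_mono) auto
  show ?thesis
  proof (cases "fst p v \<omega> \<noteq> fst q v \<omega>")
    case True
    have "fst p v \<omega> \<le> fst q v \<omega>" using le w unfolding le_on_def by blast
    moreover have "fst q v \<omega> \<le> B" using b w unfolding bnd_def by blast
    ultimately have "B - fst q v \<omega> < B - fst p v \<omega>" using True by linarith
    then have "(\<Sum>x\<in>W. B - fst q v x) < (\<Sum>x\<in>W. B - fst p v x)"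
      using m1 w fin by (intro sum_strict_mono_ex1) auto
    then show ?thesis using s2 unfolding mu_def by linarith
  next
    case False
    then have "snd p v \<omega> \<noteq> snd q v \<omega>" using d by blast
    moreover have "snd q v \<omega> \<le> snd p v \<omega>" using le w unfolding le_on_def by blast
    ultimately have "snd q v \<omega> < snd p v \<omega>" by linarith
    then have "(\<Sum>x\<in>W. snd q v x) < (\<Sum>x\<in>W. snd p v x)"
      using m2 w fin by (intro sum_strict_mono_ex1) auto
    then show ?thesis using s1 unfolding mu_def by linarith
  qed
qed

lemma upd_in_Omega:
  "\<omega> \<in> Omega I m v \<Longrightarrow> u \<in> regs I v \<Longrightarrow> j \<le> m u \<Longrightarrow> \<omega>(u := j) \<in> Omega I m v"
  by (auto simp: Omega_def PiE_def extensional_def)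

lemma nbr_finite: "finite {P (\<omega>(u := nat k)) | k. k = e \<and> 0 \<le> k \<and> k \<le> int (mu' :: nat)}"
  by (rule finite_subset[of _ "{P (\<omega>(u := nat e))}"]) auto

lemma nbr_elem: "x \<in> {P (\<omega>(u := nat k)) | k. k = e \<and> 0 \<le> k \<and> k \<le> int (mu' :: nat)}
  \<Longrightarrow> \<exists>j. j \<le> mu' \<and> x = P (\<omega>(u := j)) \<and> int j = e"
  by (auto intro!: exI[of _ "nat e"])

lemma step_props:
  assumes u: "u \<in> regs I v" and b: "bnd v (Omega I m v) B p"
  shows "le_on v (Omega I m v) p (nabla_step I m (u, v, s) p) \<and> bnd v (Omega I m v) B (nabla_step I m (u, v, s) p)"
proof -
  obtain L U where p: "p = (L, U)" by fastforce
  let ?W = "Omega I m v"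
  let ?SL = "\<lambda>\<omega>. {L v (\<omega>(u := nat k)) | k. k = int (\<omega> u) - sval s \<and> 0 \<le> k \<and> k \<le> int (m u)}"
  let ?SU = "\<lambda>\<omega>. {U v (\<omega>(u := nat k)) | k. k = int (\<omega> u) + sval s \<and> 0 \<le> k \<and> k \<le> int (m u)}"
  have st: "nabla_step I m (u, v, s) p =
    ((\<lambda>w \<omega>. if w = v \<and> \<omega> \<in> ?W then Max ({L v \<omega>} \<union> ?SL \<omega>) else L w \<omega>),
     (\<lambda>w \<omega>. if w = v \<and> \<omega> \<in> ?W then Min ({U v \<omega>} \<union> ?SU \<omega>) else U w \<omega>))"
    unfolding p nabla_step_def by simp
  have fL: "finite ({L v \<omega>} \<union> ?SL \<omega>)" for \<omega> using nbr_finite[of "L v" \<omega> u "int (\<omega> u) - sval s" "m u"] by simp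
  have fU: "finite ({U v \<omega>} \<union> ?SU \<omega>)" for \<omega> using nbr_finite[of "U v" \<omega> u "int (\<omega> u) + sval s" "m u"] by simp
  have bL: "\<forall>x\<in>?SL \<omega>. x \<le> B" if "\<omega> \<in> ?W" for \<omega>
  proof
    fix x assume "x \<in> ?SL \<omega>"
    then obtain j where "j \<le> m u" "x = L v (\<omega>(u := j))" using nbr_elem by metis
    then show "x \<le> B" using b upd_in_Omega[OF that u, of j] unfolding p bnd_def by simp
  qed
  show ?thesis
  proof -
    have A: "le_on v ?W p (nabla_step I m (u, v, s) p)"
      unfolding le_on_def st unfolding p fst_conv snd_conv
      using fL fU by (simp del: Max_ge Min_le add: Max_ge Min_le)
    have B: "bnd v ?W B (nabla_step I m (u, v, s) p)"
      unfolding bnd_def st fst_conv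
    proof
      fix \<omega> assume w: "\<omega> \<in> ?W"
      have "Max ({L v \<omega>} \<union> ?SL \<omega>) \<le> B"
        using fL[of \<omega>] bL[OF w] b w unfolding p bnd_def by (subst Max_le_iff) auto
      then show "(if v = v \<and> \<omega> \<in> ?W then Max ({L v \<omega>} \<union> ?SL \<omega>) else L v \<omega>) \<le> B" using w by simp
    qed
    show ?thesis using A B by blast
  qed
qed

lemma nabla_props:
  assumes u: "u \<in> regs I v" and fin: "finite (Omega I m v)" and b: "bnd v (Omega I m v) B p"
  shows "le_on v (Omega I m v) p (nabla I m (u, v, s) p) \<and> bnd v (Omega I m v) B (nabla I m (u, v, s) p)
    \<and> nabla_step I m (u, v, s) (nabla I m (u, v, s) p) = nabla I m (u, v, s) p"
proof -
  let ?W = "Omega I m v"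
  let ?f = "nabla_step I m (u, v, s)"
  have it: "le_on v ?W p ((?f ^^ k) p) \<and> bnd v ?W B ((?f ^^ k) p)" for k
  proof (induct k)
    case 0 then show ?case using b le_on_refl by simp
  next
    case (Suc k)
    then have "le_on v ?W ((?f ^^ k) p) (?f ((?f ^^ k) p)) \<and> bnd v ?W B (?f ((?f ^^ k) p))"
      using step_props[OF u] by blast
    then show ?case using Suc le_on_trans[of v ?W p "(?f ^^ k) p"] by simp
  qed
  have pres: "bnd v ?W B (?f x)" if "bnd v ?W B x" for x using step_props[OF u that] by blast
  have dec: "mu v ?W B (?f x) < mu v ?W B x" if "bnd v ?W B x" "?f x \<noteq> x" for x
    using step_props[OF u that(1)] mu_less[OF fin, where p=x and q="?f x" and B=B and v=v] that(2) by auto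
  obtain k where fx: "?f ((?f ^^ k) p) = (?f ^^ k) p"
    using iter_term[of "bnd v ?W B" ?f "mu v ?W B", OF pres dec b] by blast
  have "nabla I m (u, v, s) p = (?f ^^ k) p" unfolding nabla_def using iter_fix_eq[OF fx] .
  then show ?thesis using it[of k] fx by simp
qed

lemma fold_props:
  assumes rs: "\<forall>r\<in>set rs. \<exists>u s. r = (u, v, s) \<and> u \<in> regs I v"
    and fin: "finite (Omega I m v)" and b: "bnd v (Omega I m v) B p"
  shows "le_on v (Omega I m v) p (fold (nabla I m) rs p) \<and> bnd v (Omega I m v) B (fold (nabla I m) rs p)"
  using rs b
proof (induct rs arbitrary: p)
  case Nil then show ?case using le_on_refl by simp
next
  case (Cons r rs)
  then obtain u s where r: "r = (u, v, s)" "u \<in> regs I v" by auto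
  let ?q = "nabla I m r p"
  have q: "le_on v (Omega I m v) p ?q \<and> bnd v (Omega I m v) B ?q"
    using nabla_props[OF r(2) fin Cons.prems(2)] r(1) by simp
  have "le_on v (Omega I m v) ?q (fold (nabla I m) rs ?q) \<and> bnd v (Omega I m v) B (fold (nabla I m) rs ?q)"
    using Cons.hyps Cons.prems(1) q by simp
  then show ?case using q le_on_trans[of v "Omega I m v" p ?q] by simp
qed

lemma fold_fixed:
  assumes rs: "\<forall>r\<in>set rs. \<exists>u s. r = (u, v, s) \<and> u \<in> regs I v"
    and fin: "finite (Omega I m v)" and b: "bnd v (Omega I m v) B p"
    and fx: "fold (nabla I m) rs p = p"
  shows "\<forall>r\<in>set rs. nabla I m r p = p"
  using rs b fx
proof (induct rs arbitrary: p)
  case Nil then show ?case by simp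
next
  case (Cons r rs)
  then obtain u s where r: "r = (u, v, s)" "u \<in> regs I v" by auto
  let ?q = "nabla I m r p"
  have q: "le_on v (Omega I m v) p ?q \<and> bnd v (Omega I m v) B ?q"
    using nabla_props[OF r(2) fin Cons.prems(2)] r(1) by simp
  have "le_on v (Omega I m v) ?q (fold (nabla I m) rs ?q)"
    using fold_props[OF _ fin, of rs B ?q] Cons.prems(1) q by simp
  then have "le_on v (Omega I m v) ?q p" using Cons.prems(3) by simp
  then have qp: "?q = p" using le_on_antisym q by blast
  then have "fold (nabla I m) rs p = p" using Cons.prems(3) by simp
  then show ?case using Cons.hyps[of p] Cons.prems qp by simp
qed

lemma fold_id: "\<forall>r\<in>set rs. h r p = p \<Longrightarrow> fold h rs p = p"
  by (induct rs) auto

lemma nat_one_int: "nat (1 + int x) = Suc x" by linarith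

lemma fixed_Max:
  assumes fx: "nabla_step I m (u, v, s) (L, U) = (L, U)" and w: "\<omega> \<in> Omega I m v"
  shows "Max ({L v \<omega>} \<union> {L v (\<omega>(u := nat k)) | k. k = int (\<omega> u) - sval s \<and> 0 \<le> k \<and> k \<le> int (m u)}) = L v \<omega>"
    and "Min ({U v \<omega>} \<union> {U v (\<omega>(u := nat k)) | k. k = int (\<omega> u) + sval s \<and> 0 \<le> k \<and> k \<le> int (m u)}) = U v \<omega>"
proof -
  have "fst (nabla_step I m (u, v, s) (L, U)) v \<omega> = L v \<omega>" "snd (nabla_step I m (u, v, s) (L, U)) v \<omega> = U v \<omega>"
    using fx by simp_all
  then show "Max ({L v \<omega>} \<union> {L v (\<omega>(u := nat k)) | k. k = int (\<omega> u) - sval s \<and> 0 \<le> k \<and> k \<le> int (m u)}) = L v \<omega>"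
    and "Min ({U v \<omega>} \<union> {U v (\<omega>(u := nat k)) | k. k = int (\<omega> u) + sval s \<and> 0 \<le> k \<and> k \<le> int (m u)}) = U v \<omega>"
    using w unfolding nabla_step_def by simp_all
qed

lemma loc_pos:
  assumes fx: "nabla_step I m (u, v, Pos) (L, U) = (L, U)" and u: "u \<in> regs I v"
    and w: "\<omega> \<in> Omega I m v" and lt: "\<omega> u + 1 \<le> m u"
  shows "L v \<omega> \<le> L v (\<omega>(u := \<omega> u + 1)) \<and> U v \<omega> \<le> U v (\<omega>(u := \<omega> u + 1))"
proof -
  let ?w1 = "\<omega>(u := \<omega> u + 1)"
  have w1: "?w1 \<in> Omega I m v" using upd_in_Omega[OF w u lt] .
  have "L v \<omega> \<in> {L v (?w1(u := nat k)) | k. k = int (?w1 u) - sval Pos \<and> 0 \<le> k \<and> k \<le> int (m u)}"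
    using lt by (intro CollectI exI[of _ "int (\<omega> u)"]) (auto simp: sval_def)
  then have "L v \<omega> \<le> Max ({L v ?w1} \<union> {L v (?w1(u := nat k)) | k. k = int (?w1 u) - sval Pos \<and> 0 \<le> k \<and> k \<le> int (m u)})"
    using nbr_finite[of "L v" ?w1 u "int (?w1 u) - sval Pos" "m u"] by (intro Max_ge) auto
  then have A: "L v \<omega> \<le> L v ?w1" using fixed_Max(1)[OF fx w1] by simp
  have "U v ?w1 \<in> {U v (\<omega>(u := nat k)) | k. k = int (\<omega> u) + sval Pos \<and> 0 \<le> k \<and> k \<le> int (m u)}"
    using lt by (intro CollectI exI[of _ "int (\<omega> u + 1)"]) (auto simp: sval_def nat_one_int)
  then have "Min ({U v \<omega>} \<union> {U v (\<omega>(u := nat k)) | k. k = int (\<omega> u) + sval Pos \<and> 0 \<le> k \<and> k \<le> int (m u)}) \<le> U v ?w1"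
    using nbr_finite[of "U v" \<omega> u "int (\<omega> u) + sval Pos" "m u"] by (intro Min_le) auto
  then have B: "U v \<omega> \<le> U v ?w1" using fixed_Max(2)[OF fx w] by simp
  show ?thesis using A B by blast
qed

lemma loc_neg:
  assumes fx: "nabla_step I m (u, v, Neg) (L, U) = (L, U)" and u: "u \<in> regs I v"
    and w: "\<omega> \<in> Omega I m v" and lt: "\<omega> u + 1 \<le> m u"
  shows "L v (\<omega>(u := \<omega> u + 1)) \<le> L v \<omega> \<and> U v (\<omega>(u := \<omega> u + 1)) \<le> U v \<omega>"
proof -
  let ?w1 = "\<omega>(u := \<omega> u + 1)"
  have w1: "?w1 \<in> Omega I m v" using upd_in_Omega[OF w u lt] .
  have "L v ?w1 \<in> {L v (\<omega>(u := nat k)) | k. k = int (\<omega> u) - sval Neg \<and> 0 \<le> k \<and> k \<le> int (m u)}"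
    using lt by (intro CollectI exI[of _ "int (\<omega> u + 1)"]) (auto simp: sval_def nat_one_int)
  then have "L v ?w1 \<le> Max ({L v \<omega>} \<union> {L v (\<omega>(u := nat k)) | k. k = int (\<omega> u) - sval Neg \<and> 0 \<le> k \<and> k \<le> int (m u)})"
    using nbr_finite[of "L v" \<omega> u "int (\<omega> u) - sval Neg" "m u"] by (intro Max_ge) auto
  then have A: "L v ?w1 \<le> L v \<omega>" using fixed_Max(1)[OF fx w] by simp
  have "U v \<omega> \<in> {U v (?w1(u := nat k)) | k. k = int (?w1 u) + sval Neg \<and> 0 \<le> k \<and> k \<le> int (m u)}"
    using lt by (intro CollectI exI[of _ "int (\<omega> u)"]) (auto simp: sval_def)
  then have "Min ({U v ?w1} \<union> {U v (?w1(u := nat k)) | k. k = int (?w1 u) + sval Neg \<and> 0 \<le> k \<and> k \<le> int (m u)}) \<le> U v \<omega>"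
    using nbr_finite[of "U v" ?w1 u "int (?w1 u) + sval Neg" "m u"] by (intro Min_le) auto
  then have B: "U v ?w1 \<le> U v \<omega>" using fixed_Max(2)[OF fx w1] by simp
  show ?thesis using A B by blast
qed

lemma preceq_updI:
  assumes "\<forall>x\<in>regs I v. x \<noteq> u \<longrightarrow> a x = b x"
    and "if (u, v, Pos) \<in> R then a u \<le> b u else if (u, v, Neg) \<in> R then b u \<le> a u else a u = b u"
  shows "preceq I R v a b"
  unfolding preceq_def
proof
  fix x assume x: "x \<in> regs I v"
  show "if (x, v, Pos) \<in> R then a x \<le> b x else if (x, v, Neg) \<in> R then b x \<le> a x else a x = b x"
  proof (cases "x = u")
    case True then show ?thesis using assms(2) by simp
  next
    case False then have "a x = b x" using assms(1) x by blast
    then show ?thesis by simp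
  qed
qed

lemma mono_chain:
  fixes F :: "(nat \<Rightarrow> nat) \<Rightarrow> nat"
  assumes fr: "finite (regs I v)"
    and P: "\<And>\<omega> u. \<omega> \<in> Omega I m v \<Longrightarrow> (u, v, Pos) \<in> R \<Longrightarrow> \<omega> u + 1 \<le> m u \<Longrightarrow> F \<omega> \<le> F (\<omega>(u := \<omega> u + 1))"
    and N: "\<And>\<omega> u. \<omega> \<in> Omega I m v \<Longrightarrow> (u, v, Neg) \<in> R \<Longrightarrow> \<omega> u + 1 \<le> m u \<Longrightarrow> F (\<omega>(u := \<omega> u + 1)) \<le> F \<omega>"
    and regR: "\<And>u s. (u, v, s) \<in> R \<Longrightarrow> u \<in> regs I v"
    and w: "\<omega> \<in> Omega I m v" and w': "\<omega>' \<in> Omega I m v" and pq: "preceq I R v \<omega> \<omega>'"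
  shows "F \<omega> \<le> F \<omega>'"
  using w pq
proof (induction "\<Sum>x\<in>regs I v. nat \<bar>int (\<omega> x) - int (\<omega>' x)\<bar>" arbitrary: \<omega> rule: less_induct)
  case less
  show ?case
  proof (cases "\<omega> = \<omega>'")
    case True then show ?thesis by simp
  next
    case False
    then obtain u where u: "u \<in> regs I v" "\<omega> u \<noteq> \<omega>' u"
      using PiE_ext[of \<omega> "regs I v" "\<lambda>u. {0..m u}" \<omega>'] less.prems(1) w' unfolding Omega_def by blast
    have mw': "\<omega>' u \<le> m u" using w' u(1) unfolding Omega_def by auto
    have mw: "\<omega> u \<le> m u" using less.prems(1) u(1) unfolding Omega_def by auto
    have allc: "\<forall>x\<in>regs I v. (if (x, v, Pos) \<in> R then \<omega> x \<le> \<omega>' x else if (x, v, Neg) \<in> R then \<omega>' x \<le> \<omega> x else \<omega> x = \<omega>' x)"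
      using less.prems(2) unfolding preceq_def by blast
    have cu: "if (u, v, Pos) \<in> R then \<omega> u \<le> \<omega>' u else if (u, v, Neg) \<in> R then \<omega>' u \<le> \<omega> u else \<omega> u = \<omega>' u"
      using allc u(1) by blast
    show ?thesis
    proof (cases "(u, v, Pos) \<in> R")
      case True
      then have lt: "\<omega> u < \<omega>' u" using cu u(2) by simp
      define \<omega>1 where "\<omega>1 = \<omega>(u := \<omega> u + 1)"
      have w1: "\<omega>1 \<in> Omega I m v" using upd_in_Omega[OF less.prems(1) u(1)] lt mw' unfolding \<omega>1_def by simp
      have p1: "preceq I R v \<omega>1 \<omega>'"
        unfolding preceq_def
      proof
        fix x assume x: "x \<in> regs I v"
        show "if (x, v, Pos) \<in> R then \<omega>1 x \<le> \<omega>' x else if (x, v, Neg) \<in> R then \<omega>' x \<le> \<omega>1 x else \<omega>1 x = \<omega>' x"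
        proof (cases "x = u")
          case True then show ?thesis using \<open>(u, v, Pos) \<in> R\<close> lt unfolding \<omega>1_def by simp
        next
          case False then have "\<omega>1 x = \<omega> x" unfolding \<omega>1_def by simp
          then show ?thesis using allc x by simp
        qed
      qed
      have d: "(\<Sum>x\<in>regs I v. nat \<bar>int (\<omega>1 x) - int (\<omega>' x)\<bar>) < (\<Sum>x\<in>regs I v. nat \<bar>int (\<omega> x) - int (\<omega>' x)\<bar>)"
      proof (rule sum_strict_mono_ex1[OF fr])
        show "\<forall>x\<in>regs I v. nat \<bar>int (\<omega>1 x) - int (\<omega>' x)\<bar> \<le> nat \<bar>int (\<omega> x) - int (\<omega>' x)\<bar>"
        proof
          fix x show "nat \<bar>int (\<omega>1 x) - int (\<omega>' x)\<bar> \<le> nat \<bar>int (\<omega> x) - int (\<omega>' x)\<bar>"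
            using lt unfolding \<omega>1_def by (cases "x = u") (simp_all add: of_nat_diff)
        qed
        show "\<exists>x\<in>regs I v. nat \<bar>int (\<omega>1 x) - int (\<omega>' x)\<bar> < nat \<bar>int (\<omega> x) - int (\<omega>' x)\<bar>"
          using u(1) lt unfolding \<omega>1_def by (intro bexI[of _ u]) (simp_all add: of_nat_diff)
      qed
      have "F \<omega> \<le> F \<omega>1" using P[OF less.prems(1) True] lt mw' unfolding \<omega>1_def by simp
      also have "F \<omega>1 \<le> F \<omega>'" using less.hyps[OF d w1 p1] .
      finally show ?thesis .
    next
      case False
      then have "(u, v, Pos) \<notin> R" .
      have NegR: "(u, v, Neg) \<in> R" using cu u(2) False by (auto split: if_splits)
      then have lt: "\<omega>' u < \<omega> u" using cu u(2) False by simp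
      define \<omega>1 where "\<omega>1 = \<omega>(u := \<omega> u - 1)"
      have w1: "\<omega>1 \<in> Omega I m v" using upd_in_Omega[OF less.prems(1) u(1)] mw unfolding \<omega>1_def by simp
      have p1: "preceq I R v \<omega>1 \<omega>'"
        unfolding preceq_def
      proof
        fix x assume x: "x \<in> regs I v"
        show "if (x, v, Pos) \<in> R then \<omega>1 x \<le> \<omega>' x else if (x, v, Neg) \<in> R then \<omega>' x \<le> \<omega>1 x else \<omega>1 x = \<omega>' x"
        proof (cases "x = u")
          case True then show ?thesis using \<open>(u, v, Pos) \<notin> R\<close> NegR lt unfolding \<omega>1_def by simp
        next
          case False then have "\<omega>1 x = \<omega> x" unfolding \<omega>1_def by simp
          then show ?thesis using allc x by simp
        qed
      qed
      have d: "(\<Sum>x\<in>regs I v. nat \<bar>int (\<omega>1 x) - int (\<omega>' x)\<bar>) < (\<Sum>x\<in>regs I v. nat \<bar>int (\<omega> x) - int (\<omega>' x)\<bar>)"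
      proof (rule sum_strict_mono_ex1[OF fr])
        show "\<forall>x\<in>regs I v. nat \<bar>int (\<omega>1 x) - int (\<omega>' x)\<bar> \<le> nat \<bar>int (\<omega> x) - int (\<omega>' x)\<bar>"
        proof
          fix x show "nat \<bar>int (\<omega>1 x) - int (\<omega>' x)\<bar> \<le> nat \<bar>int (\<omega> x) - int (\<omega>' x)\<bar>"
            using lt unfolding \<omega>1_def by (cases "x = u") (simp_all add: of_nat_diff)
        qed
        show "\<exists>x\<in>regs I v. nat \<bar>int (\<omega>1 x) - int (\<omega>' x)\<bar> < nat \<bar>int (\<omega> x) - int (\<omega>' x)\<bar>"
          using u(1) lt unfolding \<omega>1_def by (intro bexI[of _ u]) (simp_all add: of_nat_diff)
      qed
      have e: "\<omega>1(u := \<omega>1 u + 1) = \<omega>" using lt unfolding \<omega>1_def by auto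
      have "F \<omega> \<le> F \<omega>1" using N[OF w1 NegR] e lt mw unfolding \<omega>1_def by simp
      also have "F \<omega>1 \<le> F \<omega>'" using less.hyps[OF d w1 p1] .
      finally show ?thesis .
    qed
  qed
qed

lemma step_fixed_of_mono:
  assumes u: "u \<in> regs I v" and s: "s \<in> {Pos, Neg}" and noPN: "\<not> ((u, v, Pos) \<in> R \<and> (u, v, Neg) \<in> R)"
    and sR: "(u, v, s) \<in> R"
    and M: "\<forall>\<omega>\<in>Omega I m v. \<forall>\<omega>'\<in>Omega I m v. preceq I R v \<omega> \<omega>' \<longrightarrow> L v \<omega> \<le> L v \<omega>' \<and> U v \<omega> \<le> U v \<omega>'"
  shows "nabla_step I m (u, v, s) (L, U) = (L, U)"
proof -
  let ?W = "Omega I m v"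
  let ?SL = "\<lambda>\<omega>. {L v (\<omega>(u := nat k)) | k. k = int (\<omega> u) - sval s \<and> 0 \<le> k \<and> k \<le> int (m u)}"
  let ?SU = "\<lambda>\<omega>. {U v (\<omega>(u := nat k)) | k. k = int (\<omega> u) + sval s \<and> 0 \<le> k \<and> k \<le> int (m u)}"
  have fL: "finite ({L v \<omega>} \<union> ?SL \<omega>)" for \<omega> using nbr_finite[of "L v" \<omega> u "int (\<omega> u) - sval s" "m u"] by simp
  have fU: "finite ({U v \<omega>} \<union> ?SU \<omega>)" for \<omega> using nbr_finite[of "U v" \<omega> u "int (\<omega> u) + sval s" "m u"] by simp
  have Lq: "Max ({L v \<omega>} \<union> ?SL \<omega>) = L v \<omega>" if w: "\<omega> \<in> ?W" for \<omega>
  proof (rule antisym)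
    show "L v \<omega> \<le> Max ({L v \<omega>} \<union> ?SL \<omega>)" using fL[of \<omega>] by (intro Max_ge) auto
    have "\<forall>x\<in>?SL \<omega>. x \<le> L v \<omega>"
    proof
      fix x assume "x \<in> ?SL \<omega>"
      then obtain j where j: "j \<le> m u" "x = L v (\<omega>(u := j))" "int j = int (\<omega> u) - sval s"
        using nbr_elem by metis
      have wj: "\<omega>(u := j) \<in> ?W" using upd_in_Omega[OF w u j(1)] .
      have "if (u, v, Pos) \<in> R then (\<omega>(u := j)) u \<le> \<omega> u else if (u, v, Neg) \<in> R then \<omega> u \<le> (\<omega>(u := j)) u else (\<omega>(u := j)) u = \<omega> u"
        using s sR noPN j(3) by (auto simp: sval_def)
      then have "preceq I R v (\<omega>(u := j)) \<omega>" by (intro preceq_updI) auto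
      then show "x \<le> L v \<omega>" using M wj w j(2) by blast
    qed
    then show "Max ({L v \<omega>} \<union> ?SL \<omega>) \<le> L v \<omega>" using fL[of \<omega>] by (subst Max_le_iff) auto
  qed
  have Uq: "Min ({U v \<omega>} \<union> ?SU \<omega>) = U v \<omega>" if w: "\<omega> \<in> ?W" for \<omega>
  proof (rule antisym)
    show "Min ({U v \<omega>} \<union> ?SU \<omega>) \<le> U v \<omega>" using fU[of \<omega>] by (intro Min_le) auto
    have "\<forall>x\<in>?SU \<omega>. U v \<omega> \<le> x"
    proof
      fix x assume "x \<in> ?SU \<omega>"
      then obtain j where j: "j \<le> m u" "x = U v (\<omega>(u := j))" "int j = int (\<omega> u) + sval s"
        using nbr_elem by metis
      have wj: "\<omega>(u := j) \<in> ?W" using upd_in_Omega[OF w u j(1)] .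
      have "if (u, v, Pos) \<in> R then \<omega> u \<le> (\<omega>(u := j)) u else if (u, v, Neg) \<in> R then (\<omega>(u := j)) u \<le> \<omega> u else \<omega> u = (\<omega>(u := j)) u"
        using s sR noPN j(3) by (auto simp: sval_def)
      then have "preceq I R v \<omega> (\<omega>(u := j))" by (intro preceq_updI) auto
      then show "U v \<omega> \<le> x" using M wj w j(2) by blast
    qed
    then show "U v \<omega> \<le> Min ({U v \<omega>} \<union> ?SU \<omega>)" using fU[of \<omega>] by (subst Min_ge_iff) auto
  qed
  have e1: "(\<lambda>w \<omega>. if w = v \<and> \<omega> \<in> ?W then Max ({L v \<omega>} \<union> ?SL \<omega>) else L w \<omega>) = L"
    using Lq by (intro ext) auto
  have e2: "(\<lambda>w \<omega>. if w = v \<and> \<omega> \<in> ?W then Min ({U v \<omega>} \<union> ?SU \<omega>) else U w \<omega>) = U"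
    using Uq by (intro ext) auto
  show ?thesis unfolding nabla_step_def using e1 e2 by simp
qed

theorem lemma4:
  fixes n :: nat and I :: "(nat \<times> nat) set" and m :: "nat \<Rightarrow> nat"
    and R :: "(nat \<times> nat \<times> sign) set" and v :: nat and L U :: param
    and rs :: "(nat \<times> nat \<times> sign) list"
  assumes "I \<subseteq> {1..n} \<times> {1..n}"
    and "well_formed I R"
    and "v \<in> {1..n}"
    and "is_param n I m L" and "is_param n I m U"
    and "set rs = M_of R v"
  shows "nabla_set I m rs (L, U) = (L, U) \<longleftrightarrow>
    (\<forall>\<omega>\<in>Omega I m v. \<forall>\<omega>'\<in>Omega I m v. preceq I R v \<omega> \<omega>' \<longrightarrow>
        L v \<omega> \<le> L v \<omega>' \<and> U v \<omega> \<le> U v \<omega>')"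
proof -
  let ?W = "Omega I m v"
  have "regs I v \<subseteq> {1..n}"
  proof
    fix u assume "u \<in> regs I v"
    then have "(u, v) \<in> I" unfolding regs_def by simp
    then have "(u, v) \<in> {1..n} \<times> {1..n}" using assms(1) by (rule subsetD[rotated])
    then show "u \<in> {1..n}" by simp
  qed
  then have fr: "finite (regs I v)" by (rule finite_subset) simp
  have fin: "finite ?W" unfolding Omega_def using fr by (intro finite_PiE) auto
  have rsR: "r \<in> set rs \<longleftrightarrow> (\<exists>u s. r = (u, v, s) \<and> (u, v, s) \<in> R \<and> s \<in> {Pos, Neg})" for r
    using assms(6) unfolding M_of_def by auto
  have regR: "u \<in> regs I v" if "(u, v, s) \<in> R" for u s using assms(2) that unfolding well_formed_def by auto
  have rsf: "\<forall>r\<in>set rs. \<exists>u s. r = (u, v, s) \<and> u \<in> regs I v" using rsR regR by blast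
  have noPN: "\<not> ((u, v, Pos) \<in> R \<and> (u, v, Neg) \<in> R)" for u using assms(2) unfolding well_formed_def by blast
  let ?g = "\<lambda>p. fold (nabla I m) rs p"
  show ?thesis
  proof
    assume H: "nabla_set I m rs (L, U) = (L, U)"
    define B where "B = Max ((\<lambda>\<omega>. L v \<omega>) ` ?W)"
    have b: "bnd v ?W B (L, U)" unfolding bnd_def B_def using fin by simp
    have pres: "bnd v ?W B (?g x)" if "bnd v ?W B x" for x using fold_props[OF rsf fin that] by blast
    have dec: "mu v ?W B (?g x) < mu v ?W B x" if "bnd v ?W B x" "?g x \<noteq> x" for x
      using fold_props[OF rsf fin that(1)] mu_less[OF fin, where p=x and q="?g x" and B=B and v=v] that(2) by auto
    obtain k where fx: "?g ((?g ^^ k) (L, U)) = (?g ^^ k) (L, U)"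
      using iter_term[of "bnd v ?W B" ?g "mu v ?W B", OF pres dec b] by blast
    have "nabla_set I m rs (L, U) = (?g ^^ k) (L, U)" unfolding nabla_set_def using iter_fix_eq[OF fx] .
    then have g0: "?g (L, U) = (L, U)" using fx H by simp
    have nf: "\<forall>r\<in>set rs. nabla I m r (L, U) = (L, U)" using fold_fixed[OF rsf fin b g0] .
    have SF: "nabla_step I m (u, v, s) (L, U) = (L, U)" if "(u, v, s) \<in> R" "s \<in> {Pos, Neg}" for u s
    proof -
      have "(u, v, s) \<in> set rs" using rsR that by blast
      then have "nabla I m (u, v, s) (L, U) = (L, U)" using nf by blast
      then show ?thesis using nabla_props[OF regR[OF that(1)] fin b, of s] by simp
    qed
    show "\<forall>\<omega>\<in>?W. \<forall>\<omega>'\<in>?W. preceq I R v \<omega> \<omega>' \<longrightarrow> L v \<omega> \<le> L v \<omega>' \<and> U v \<omega> \<le> U v \<omega>'"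
    proof (intro ballI impI conjI)
      fix \<omega> \<omega>' assume w: "\<omega> \<in> ?W" "\<omega>' \<in> ?W" "preceq I R v \<omega> \<omega>'"
      show "L v \<omega> \<le> L v \<omega>'"
      proof (rule mono_chain[OF fr _ _ _ w])
        show "L v \<omega>1 \<le> L v (\<omega>1(u := \<omega>1 u + 1))" if "\<omega>1 \<in> ?W" "(u, v, Pos) \<in> R" "\<omega>1 u + 1 \<le> m u" for \<omega>1 u
          using loc_pos[OF SF[OF that(2)] regR[OF that(2)] that(1) that(3)] by simp
        show "L v (\<omega>1(u := \<omega>1 u + 1)) \<le> L v \<omega>1" if "\<omega>1 \<in> ?W" "(u, v, Neg) \<in> R" "\<omega>1 u + 1 \<le> m u" for \<omega>1 u
          using loc_neg[OF SF[OF that(2)] regR[OF that(2)] that(1) that(3)] by simp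
        show "u \<in> regs I v" if "(u, v, s) \<in> R" for u s using regR that .
      qed
      show "U v \<omega> \<le> U v \<omega>'"
      proof (rule mono_chain[OF fr _ _ _ w])
        show "U v \<omega>1 \<le> U v (\<omega>1(u := \<omega>1 u + 1))" if "\<omega>1 \<in> ?W" "(u, v, Pos) \<in> R" "\<omega>1 u + 1 \<le> m u" for \<omega>1 u
          using loc_pos[OF SF[OF that(2)] regR[OF that(2)] that(1) that(3)] by simp
        show "U v (\<omega>1(u := \<omega>1 u + 1)) \<le> U v \<omega>1" if "\<omega>1 \<in> ?W" "(u, v, Neg) \<in> R" "\<omega>1 u + 1 \<le> m u" for \<omega>1 u
          using loc_neg[OF SF[OF that(2)] regR[OF that(2)] that(1) that(3)] by simp
        show "u \<in> regs I v" if "(u, v, s) \<in> R" for u s using regR that .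
      qed
    qed
  next
    assume M: "\<forall>\<omega>\<in>?W. \<forall>\<omega>'\<in>?W. preceq I R v \<omega> \<omega>' \<longrightarrow> L v \<omega> \<le> L v \<omega>' \<and> U v \<omega> \<le> U v \<omega>'"
    have "\<forall>r\<in>set rs. nabla I m r (L, U) = (L, U)"
    proof
      fix r assume "r \<in> set rs"
      then obtain u s where r: "r = (u, v, s)" "(u, v, s) \<in> R" "s \<in> {Pos, Neg}" using rsR by blast
      have "nabla_step I m (u, v, s) (L, U) = (L, U)"
        using step_fixed_of_mono[where L=L and U=U and m=m and v=v, OF regR[OF r(2)] r(3) noPN[of u] r(2) M] .
      then show "nabla I m r (L, U) = (L, U)" unfolding nabla_def r(1) by (rule iter_fix_self)
    qed
    then have "?g (L, U) = (L, U)" by (rule fold_id)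
    then show "nabla_set I m rs (L, U) = (L, U)" unfolding nabla_set_def by (rule iter_fix_self)
  qed
qed

end
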